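(* For every alternation flag $\alpha$, every hyperassignment $\mathcal X\in\mathrm{HAsg}$ and every behavioral quantifier prefix $\wp$ with pairwise distinct propositions and $\mathrm{ap}(\wp)\cap\mathrm{ap}(\mathcal X)=\emptyset$: $$\mathrm{evl}_\alpha(\mathcal X,C_{\bar\alpha}(\wp))\sqsubseteq\mathrm{evl}_\alpha(\mathcal X,\wp)\sqsubseteq\mathrm{evl}_\alpha(\mathcal X,C_\alpha(\wp)).$$
   Context: Let $AP$ be a set of atomic propositions and $\mathbb B=\{\top,\bot\}$. A temporal valuation is a function $f:\mathbb N\to\mathbb B$. An assignment is a partial function $\chi:AP\rightharpoonup(\mathbb N\to\mathbb B)$; $\mathrm{Asg}$ is the set of all assignments, $\mathrm{Asg}(P)$ the set of assignments with domain exactly $P\subseteq AP$. For an assignment $\chi$, $p\in AP$ and a temporal valuation $f$, $\chi[p\mapsto f]$ is the assignment that agrees with $\chi$ except that it maps $p$ to $f$. A hyperassignment is a set $\mathcal X$ with $\emptyset\neq\mathcal X\subseteq 2^{\mathrm{Asg}(P)}$ and $\emptyset\notin\mathcal X$, for some $P\subseteq AP$; this $P$ is denoted $\mathrm{ap}(\mathcal X)$. $\mathrm{HAsg}$ is the set of all hyperassignments. For $\mathcal X_1,\mathcal X_2\in\mathrm{HAsg}$, $\mathcal X_1\sqsubseteq\mathcal X_2$ iff for every $X_1\in\mathcal X_1$ there is $X_2\in\mathcal X_2$ with $X_2\subseteq X_1$. A choice function for $\mathcal X$ is a map $c:\mathcal X\to\mathrm{Asg}$ with $c(X)\in X$ for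 all $X\in\mathcal X$. The dual of $\mathcal X$ is $\overline{\mathcal X}=\{\mathrm{img}(c): c\text{ a choice function for }\mathcal X\}$. A functor over $P\subseteq AP$ is a function $F:\mathrm{Asg}(P)\to(\mathbb N\to\mathbb B)$; $\mathrm{Fnc}(P)$ is the set of all of them. $\mathrm{ext}(\chi,F,p)=\chi[p\mapsto F(\chi)]$ and $\mathrm{ext}(X,F,p)=\{\mathrm{ext}(\chi,F,p):\chi\in X\}$. For $\chi_1,\chi_2\in\mathrm{Asg}(P)$, $p\in P$, $k\in\mathbb N$: $\chi_1\approx^{>k}_p\chi_2$ iff $\chi_1(q)=\chi_2(q)$ for all $q\in P\setminus\{p\}$ and $\chi_1(p)(t)=\chi_2(p)(t)$ for all $t\le k$; $\chi_1\approx^{\ge k}_p\chi_2$ is defined the same way with $t<k$ in place of $t\le k$. $F\in\mathrm{Fnc}(P)$ is behavioral (resp. strongly behavioral) w.r.t. $p\in P$ if $F(\chi_1)(k)=F(\chi_2)(k)$ for all $k\in\mathbb N$ and all $\chi_1,\chi_2$ with $\chi_1\approx^{>k}_p\chi_2$ (resp. $\chi_1\approx^{\ge k}_p\chi_2$). A quantifier specification is a pair $\sigma=\langle P_B,P_S\rangle$ of subsets of $AP$; $\mathrm{Fnc}_\sigma(P)$ is the set of $F\in\mathrm{Fnc}(P)$ that are behavioral w.r.t. every $p\in P_B\cap P$ and strongly behavioral w.r.t. every $p\in P_S\cap P$. $\mathrm{ext}_\sigma(\mathcal X,p)=\{\mathrm{ext}(X,F,p):X\in\mathcal X,\ F\in\mathrm{Fnc}_\sigma(\mathrm{ap}(\mathcal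 X))\}$. Union of specifications is componentwise: $\langle P_{B1},P_{S1}\rangle\cup\langle P_{B2},P_{S2}\rangle=\langle P_{B1}\cup P_{B2},P_{S1}\cup P_{S2}\rangle$. Write $\mathsf B=\langle AP,\emptyset\rangle$. A quantifier prefix is a finite sequence $\wp=Q_1^{\sigma_1}p_1\cdots Q_n^{\sigma_n}p_n$ with $Q_i\in\{\exists,\forall\}$, quantifier specifications $\sigma_i$ and $p_i\in AP$; $\mathrm{ap}(\wp)=\{p_1,\dots,p_n\}$, $\epsilon$ is the empty prefix. It is behavioral if every $\sigma_i=\mathsf B$. For a vector $\vec p=p_1\cdots p_m$, $Q^\sigma\vec p$ abbreviates $Q^\sigma p_1\cdots Q^\sigma p_m$. Alternation flags are $\exists\forall$ and $\forall\exists$; $\bar\alpha$ is the other flag. The quantifier $\exists$ is $\exists\forall$-coherent and $\forall$ is $\forall\exists$-coherent. Evolution: $\mathrm{evl}_\alpha(\mathcal X,Q^\sigma p)=\mathrm{ext}_\sigma(\mathcal X,p)$ if $Q$ is $\alpha$-coherent, and $\mathrm{evl}_\alpha(\mathcal X,Q^\sigma p)=\overline{\mathrm{ext}_\sigma(\overline{\mathcal X},p)}$ otherwise; $\mathrm{evl}_\alpha(\mathcal X,\epsilon)=\mathcal X$ and $\mathrm{evl}_\alpha(\mathcal X,Q^\sigma p.\wp)=\mathrm{evl}_\alpha(\mathrm{evl}_\alpha(\mathcal X,Q^\sigma p),\wp)$. Canonical forms. Every behavioral prefix $\wp$ can be uniquely written as $\exists^{\mathsf B}\vec q_0.\forall^{\mathsf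 B}\vec p_1.\exists^{\mathsf B}\vec q_1\cdots\forall^{\mathsf B}\vec p_k.\exists^{\mathsf B}\vec q_k.\forall^{\mathsf B}\vec p_{k+1}$ with $k\in\mathbb N$, $\vec q_0,\vec p_{k+1}$ possibly empty and $\vec p_i,\vec q_i$ nonempty for $1\le i\le k$; then $C_{\exists\forall}(\wp)=\exists^{\mathsf B}\vec q_0\cdots\exists^{\mathsf B}\vec q_k.\forall^{\tau_1}\vec p_1\cdots\forall^{\tau_{k+1}}\vec p_{k+1}$ where $\tau_i=\mathsf B\cup\langle\emptyset,\vec q_i\cup\cdots\cup\vec q_k\rangle$ (for $i=k+1$, $\tau_{k+1}=\mathsf B$). Dually, writing $\wp$ uniquely as $\forall^{\mathsf B}\vec p_0.\exists^{\mathsf B}\vec q_1.\forall^{\mathsf B}\vec p_1\cdots\exists^{\mathsf B}\vec q_k.\forall^{\mathsf B}\vec p_k.\exists^{\mathsf B}\vec q_{k+1}$ (with $\vec p_0,\vec q_{k+1}$ possibly empty, the others nonempty), $C_{\forall\exists}(\wp)=\forall^{\mathsf B}\vec p_0\cdots\forall^{\mathsf B}\vec p_k.\exists^{\tau_1}\vec q_1\cdots\exists^{\tau_{k+1}}\vec q_{k+1}$ with $\tau_i=\mathsf B\cup\langle\emptyset,\vec p_i\cup\cdots\cup\vec p_k\rangle$. *)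

theory Defs
  imports Main
begin

type_synonym tval = "nat \<Rightarrow> bool"
type_synonym 'ap asg = "'ap \<Rightarrow> tval option"
type_synonym 'ap hasg = "'ap asg set set"

definition Asg :: "'ap set \<Rightarrow> 'ap asg set" where
  "Asg P = {\<chi>. dom \<chi> = P}"

definition is_hasg :: "'ap hasg \<Rightarrow> bool" where
  "is_hasg \<X> \<longleftrightarrow> \<X> \<noteq> {} \<and> {} \<notin> \<X> \<and> (\<exists>P. \<forall>X\<in>\<X>. X \<subseteq> Asg P)"

text \<open>ap of a hyperassignment: the common domain of its assignments.\<close>
definition hap :: "'ap hasg \<Rightarrow> 'ap set" where
  "hap \<X> = dom (SOME \<chi>. \<exists>X\<in>\<X>. \<chi> \<in> X)"

definition hle :: "'ap hasg \<Rightarrow> 'ap hasg \<Rightarrow> bool" (infix "\<sqsubseteq>\<^sub>H" 50) where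
  "\<X>1 \<sqsubseteq>\<^sub>H \<X>2 \<longleftrightarrow> (\<forall>X1\<in>\<X>1. \<exists>X2\<in>\<X>2. X2 \<subseteq> X1)"

definition choice_fun :: "'ap hasg \<Rightarrow> ('ap asg set \<Rightarrow> 'ap asg) \<Rightarrow> bool" where
  "choice_fun \<X> c \<longleftrightarrow> (\<forall>X\<in>\<X>. c X \<in> X)"

definition dual :: "'ap hasg \<Rightarrow> 'ap hasg" where
  "dual \<X> = {c ` \<X> | c. choice_fun \<X> c}"

text \<open>Functors over P: functions Asg(P) to valuations (values outside Asg(P) are irrelevant).\<close>
type_synonym 'ap fnc = "'ap asg \<Rightarrow> tval"

definition ext_asg :: "'ap asg \<Rightarrow> 'ap fnc \<Rightarrow> 'ap \<Rightarrow> 'ap asg" where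
  "ext_asg \<chi> F p = \<chi>(p := Some (F \<chi>))"

definition ext_set :: "'ap asg set \<Rightarrow> 'ap fnc \<Rightarrow> 'ap \<Rightarrow> 'ap asg set" where
  "ext_set X F p = {ext_asg \<chi> F p | \<chi>. \<chi> \<in> X}"

definition agree_gt :: "'ap set \<Rightarrow> 'ap \<Rightarrow> nat \<Rightarrow> 'ap asg \<Rightarrow> 'ap asg \<Rightarrow> bool" where
  "agree_gt P p k \<chi>1 \<chi>2 \<longleftrightarrow> (\<forall>q\<in>P - {p}. \<chi>1 q = \<chi>2 q) \<and>
      (\<forall>t\<le>k. the (\<chi>1 p) t = the (\<chi>2 p) t)"

definition agree_ge :: "'ap set \<Rightarrow> 'ap \<Rightarrow> nat \<Rightarrow> 'ap asg \<Rightarrow> 'ap asg \<Rightarrow> bool" where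
  "agree_ge P p k \<chi>1 \<chi>2 \<longleftrightarrow> (\<forall>q\<in>P - {p}. \<chi>1 q = \<chi>2 q) \<and>
      (\<forall>t<k. the (\<chi>1 p) t = the (\<chi>2 p) t)"

definition behavioral :: "'ap set \<Rightarrow> 'ap fnc \<Rightarrow> 'ap \<Rightarrow> bool" where
  "behavioral P F p \<longleftrightarrow> (\<forall>k \<chi>1 \<chi>2. \<chi>1 \<in> Asg P \<longrightarrow> \<chi>2 \<in> Asg P \<longrightarrow>
      agree_gt P p k \<chi>1 \<chi>2 \<longrightarrow> F \<chi>1 k = F \<chi>2 k)"

definition strongly_behavioral :: "'ap set \<Rightarrow> 'ap fnc \<Rightarrow> 'ap \<Rightarrow> bool" where
  "strongly_behavioral P F p \<longleftrightarrow> (\<forall>k \<chi>1 \<chi>2. \<chi>1 \<in> Asg P \<longrightarrow> \<chi>2 \<in> Asg P \<longrightarrow>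
      agree_ge P p k \<chi>1 \<chi>2 \<longrightarrow> F \<chi>1 k = F \<chi>2 k)"

type_synonym 'ap qspec = "'ap set \<times> 'ap set"

definition Fnc_spec :: "'ap qspec \<Rightarrow> 'ap set \<Rightarrow> 'ap fnc set" where
  "Fnc_spec \<sigma> P = {F. (\<forall>p\<in>fst \<sigma> \<inter> P. behavioral P F p) \<and>
                        (\<forall>p\<in>snd \<sigma> \<inter> P. strongly_behavioral P F p)}"

definition ext_spec :: "'ap qspec \<Rightarrow> 'ap hasg \<Rightarrow> 'ap \<Rightarrow> 'ap hasg" where
  "ext_spec \<sigma> \<X> p = {ext_set X F p | X F. X \<in> \<X> \<and> F \<in> Fnc_spec \<sigma> (hap \<X>)}"

definition spec_union :: "'ap qspec \<Rightarrow> 'ap qspec \<Rightarrow> 'ap qspec" where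
  "spec_union s1 s2 = (fst s1 \<union> fst s2, snd s1 \<union> snd s2)"

definition specB :: "'ap qspec" where
  "specB = (UNIV, {})"

datatype quant = QEx | QAll
datatype aflag = EA | AE

type_synonym 'ap prefix = "(quant \<times> 'ap qspec \<times> 'ap) list"

definition prefix_ap :: "'ap prefix \<Rightarrow> 'ap set" where
  "prefix_ap w = set (map (\<lambda>(Q, \<sigma>, p). p) w)"

definition behavioral_prefix :: "'ap prefix \<Rightarrow> bool" where
  "behavioral_prefix w \<longleftrightarrow> (\<forall>(Q, \<sigma>, p) \<in> set w. \<sigma> = specB)"

fun flag_bar :: "aflag \<Rightarrow> aflag" where
  "flag_bar EA = AE" | "flag_bar AE = EA"

fun coh_quant :: "aflag \<Rightarrow> quant" where
  "coh_quant EA = QEx" | "coh_quant AE = QAll"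

definition evl1 :: "aflag \<Rightarrow> 'ap hasg \<Rightarrow> quant \<Rightarrow> 'ap qspec \<Rightarrow> 'ap \<Rightarrow> 'ap hasg" where
  "evl1 \<alpha> \<X> Q \<sigma> p = (if Q = coh_quant \<alpha> then ext_spec \<sigma> \<X> p
                       else dual (ext_spec \<sigma> (dual \<X>) p))"

fun evl :: "aflag \<Rightarrow> 'ap hasg \<Rightarrow> 'ap prefix \<Rightarrow> 'ap hasg" where
  "evl \<alpha> \<X> [] = \<X>"
| "evl \<alpha> \<X> ((Q, \<sigma>, p) # w) = evl \<alpha> (evl1 \<alpha> \<X> Q \<sigma> p) w"

text \<open>For a behavioral prefix written in blocks, the
  alpha-coherent (leading) blocks are moved to the front (keeping order, with spec B),
  followed by the remaining blocks in order, where each proposition of the i-th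
  non-leading block gets spec B union (empty, union of all leading blocks after it).
  For a proposition of block i, the leading blocks after it in the prefix are exactly
  the leading blocks i..k of the decomposition, so this is computed positionally.\<close>
definition lead_props :: "quant \<Rightarrow> 'ap prefix \<Rightarrow> 'ap set" where
  "lead_props Q w = {p. \<exists>\<sigma>. (Q, \<sigma>, p) \<in> set w}"

fun canon_trail :: "quant \<Rightarrow> 'ap prefix \<Rightarrow> 'ap prefix" where
  "canon_trail L [] = []"
| "canon_trail L ((Q, \<sigma>, p) # w) =
     (if Q = L then canon_trail L w
      else (Q, spec_union specB ({}, lead_props L w), p) # canon_trail L w)"

definition canon :: "aflag \<Rightarrow> 'ap prefix \<Rightarrow> 'ap prefix" where
  "canon \<alpha> w = [(Q, \<sigma>, p) \<leftarrow> w. Q = coh_quant \<alpha>] @ canon_trail (coh_quant \<alpha>) w"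

end

theory Submission
  imports Defs
begin


definition hz :: "'ap hasg \<Rightarrow> 'ap set \<Rightarrow> bool" where
  "hz XX P \<longleftrightarrow> XX \<noteq> {} \<and> {} \<notin> XX \<and> (\<forall>Y\<in>XX. Y \<subseteq> Asg P)"

lemma hz_hap: assumes "hz XX P" shows "hap XX = P"
proof -
  from assms obtain Y where Y: "Y \<in> XX" "Y \<noteq> {}" unfolding hz_def by blast
  then obtain x where "x \<in> Y" by blast
  hence "\<exists>x. \<exists>Y\<in>XX. x \<in> Y" using Y by blast
  hence "\<exists>Y\<in>XX. (SOME x. \<exists>Y\<in>XX. x \<in> Y) \<in> Y" by (rule someI_ex)
  then obtain Y' where "Y' \<in> XX" "(SOME x. \<exists>Y\<in>XX. x \<in> Y) \<in> Y'" by blast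
  with assms show ?thesis unfolding hap_def hz_def Asg_def by auto
qed

lemma hz_is_hasg: assumes "is_hasg XX" shows "hz XX (hap XX)"
proof -
  from assms obtain P where "XX \<noteq> {}" "{} \<notin> XX" "\<forall>Y\<in>XX. Y \<subseteq> Asg P" unfolding is_hasg_def by blast
  hence h: "hz XX P" unfolding hz_def by blast
  thus ?thesis using hz_hap[OF h] by simp
qed

lemma choice_ex: assumes "{} \<notin> XX" shows "choice_fun XX (\<lambda>Y. SOME x. x \<in> Y)"
  unfolding choice_fun_def
proof (intro ballI)
  fix Y assume "Y \<in> XX"
  with assms have "Y \<noteq> {}" by auto
  then obtain x where "x \<in> Y" by auto
  thus "(SOME x. x \<in> Y) \<in> Y" by (rule someI[where P="\<lambda>z. z \<in> Y"])
qed

lemma hz_dual: assumes "hz XX P" shows "hz (dual XX) P"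
proof -
  have c: "choice_fun XX (\<lambda>Y. SOME x. x \<in> Y)" using assms choice_ex unfolding hz_def by blast
  have "(\<lambda>Y. SOME x. x \<in> Y) ` XX \<in> dual XX" unfolding dual_def using c by blast
  hence ne: "dual XX \<noteq> {}" by blast
  have "{} \<notin> dual XX"
  proof
    assume "{} \<in> dual XX"
    then obtain c where "{} = c ` XX" unfolding dual_def by blast
    thus False using assms unfolding hz_def by blast
  qed
  moreover have "\<forall>T\<in>dual XX. T \<subseteq> Asg P"
  proof
    fix T assume "T \<in> dual XX"
    then obtain c where "T = c ` XX" "choice_fun XX c" unfolding dual_def by blast
    thus "T \<subseteq> Asg P" using assms unfolding hz_def choice_fun_def by blast
  qed
  ultimately show ?thesis using ne unfolding hz_def by blast
qed

lemma hle_refl: "XX \<sqsubseteq>\<^sub>H XX" unfolding hle_def by auto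

lemma hle_trans: assumes "A \<sqsubseteq>\<^sub>H B" "B \<sqsubseteq>\<^sub>H C" shows "A \<sqsubseteq>\<^sub>H C"
  unfolding hle_def
proof
  fix X assume "X \<in> A"
  then obtain Y where "Y \<in> B" "Y \<subseteq> X" using assms(1) unfolding hle_def by auto
  moreover then obtain Z where "Z \<in> C" "Z \<subseteq> Y" using assms(2) unfolding hle_def by auto
  ultimately show "\<exists>Z\<in>C. Z \<subseteq> X" by auto
qed

lemma dual_anti: assumes "XX1 \<sqsubseteq>\<^sub>H XX2" shows "dual XX2 \<sqsubseteq>\<^sub>H dual XX1"
  unfolding hle_def
proof
  fix T assume "T \<in> dual XX2"
  then obtain c where T: "T = c ` XX2" and c: "choice_fun XX2 c" unfolding dual_def by blast
  define c1 where "c1 = (\<lambda>Y1. c (SOME Y2. Y2 \<in> XX2 \<and> Y2 \<subseteq> Y1))"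
  have "\<forall>Y1\<in>XX1. (SOME Y2. Y2 \<in> XX2 \<and> Y2 \<subseteq> Y1) \<in> XX2 \<and> (SOME Y2. Y2 \<in> XX2 \<and> Y2 \<subseteq> Y1) \<subseteq> Y1"
  proof
    fix Y1 assume "Y1 \<in> XX1"
    hence "\<exists>Y2. Y2 \<in> XX2 \<and> Y2 \<subseteq> Y1" using assms unfolding hle_def by blast
    thus "(SOME Y2. Y2 \<in> XX2 \<and> Y2 \<subseteq> Y1) \<in> XX2 \<and> (SOME Y2. Y2 \<in> XX2 \<and> Y2 \<subseteq> Y1) \<subseteq> Y1"
      by (rule someI_ex[where P="\<lambda>Y2. Y2 \<in> XX2 \<and> Y2 \<subseteq> Y1"])
  qed
  hence h: "\<forall>Y1\<in>XX1. c1 Y1 \<in> Y1 \<and> c1 Y1 \<in> T" using c T unfolding c1_def choice_fun_def by blast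
  hence "choice_fun XX1 c1" unfolding choice_fun_def by blast
  hence "c1 ` XX1 \<in> dual XX1" unfolding dual_def by blast
  moreover have "c1 ` XX1 \<subseteq> T" using h by blast
  ultimately show "\<exists>X2\<in>dual XX1. X2 \<subseteq> T" by blast
qed

lemma dd1: assumes "hz XX P" shows "XX \<sqsubseteq>\<^sub>H dual (dual XX)"
  unfolding hle_def
proof
  fix Y assume Y: "Y \<in> XX"
  define d where "d = (\<lambda>Z. SOME x. x \<in> Z \<and> x \<in> Y)"
  have h: "\<forall>Z\<in>dual XX. d Z \<in> Z \<and> d Z \<in> Y"
  proof
    fix Z assume "Z \<in> dual XX"
    hence "\<exists>x. x \<in> Z \<and> x \<in> Y" using Y unfolding dual_def choice_fun_def by blast
    thus "d Z \<in> Z \<and> d Z \<in> Y" unfolding d_def by (rule someI_ex[where P="\<lambda>x. x \<in> Z \<and> x \<in> Y"])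
  qed
  hence "d ` dual XX \<in> dual (dual XX)" unfolding dual_def choice_fun_def by blast
  moreover have "d ` dual XX \<subseteq> Y" using h by auto
  ultimately show "\<exists>X2\<in>dual (dual XX). X2 \<subseteq> Y" by auto
qed

lemma dd2: assumes "hz XX P" shows "dual (dual XX) \<sqsubseteq>\<^sub>H XX"
  unfolding hle_def
proof
  fix T assume "T \<in> dual (dual XX)"
  then obtain d where T: "T = d ` dual XX" and d: "choice_fun (dual XX) d" unfolding dual_def by blast
  show "\<exists>Y\<in>XX. Y \<subseteq> T"
  proof (rule ccontr)
    assume "\<not> ?thesis"
    hence ex: "\<forall>Y\<in>XX. \<exists>x. x \<in> Y \<and> x \<notin> T" by (auto simp: subset_iff)
    have h: "\<forall>Y\<in>XX. (SOME x. x \<in> Y \<and> x \<notin> T) \<in> Y \<and> (SOME x. x \<in> Y \<and> x \<notin> T) \<notin> T"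
    proof
      fix Y assume "Y \<in> XX"
      with ex have "\<exists>x. x \<in> Y \<and> x \<notin> T" by blast
      thus "(SOME x. x \<in> Y \<and> x \<notin> T) \<in> Y \<and> (SOME x. x \<in> Y \<and> x \<notin> T) \<notin> T"
        by (rule someI_ex[where P="\<lambda>x. x \<in> Y \<and> x \<notin> T"])
    qed
    define c where "c = (\<lambda>Y. SOME x. x \<in> Y \<and> x \<notin> T)"
    have cc: "c ` XX \<in> dual XX" using h unfolding c_def dual_def choice_fun_def by blast
    hence "d (c ` XX) \<in> c ` XX" using d unfolding choice_fun_def by blast
    then obtain Y where Y: "Y \<in> XX" "d (c ` XX) = c Y" by blast
    moreover have "d (c ` XX) \<in> T" using T cc by blast
    ultimately show False using h unfolding c_def by auto
  qed
qed

lemma ext_mono: assumes "XX1 \<sqsubseteq>\<^sub>H XX2" "hap XX1 = hap XX2"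
  shows "ext_spec \<sigma> XX1 p \<sqsubseteq>\<^sub>H ext_spec \<sigma> XX2 p"
  unfolding hle_def
proof
  fix E assume "E \<in> ext_spec \<sigma> XX1 p"
  then obtain Y F where E: "E = ext_set Y F p" "Y \<in> XX1" "F \<in> Fnc_spec \<sigma> (hap XX1)"
    unfolding ext_spec_def by blast
  then obtain Y2 where Y2: "Y2 \<in> XX2" "Y2 \<subseteq> Y" using assms(1) unfolding hle_def by blast
  have "ext_set Y2 F p \<in> ext_spec \<sigma> XX2 p" using Y2 E assms(2) unfolding ext_spec_def by auto
  moreover have "ext_set Y2 F p \<subseteq> E" using Y2 E unfolding ext_set_def by auto
  ultimately show "\<exists>X2\<in>ext_spec \<sigma> XX2 p. X2 \<subseteq> E" by blast
qed

lemma Asg_upd: "x \<in> Asg P \<Longrightarrow> x(p := Some f) \<in> Asg (insert p P)"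
  unfolding Asg_def by auto

lemma const_Fnc: "(\<lambda>_ _. False) \<in> Fnc_spec \<sigma> P"
  unfolding Fnc_spec_def behavioral_def strongly_behavioral_def by auto

lemma hz_ext: assumes "hz XX P" shows "hz (ext_spec \<sigma> XX p) (insert p P)"
proof -
  have "ext_spec \<sigma> XX p \<noteq> {}" using assms const_Fnc unfolding hz_def ext_spec_def by blast
  moreover have "{} \<notin> ext_spec \<sigma> XX p" using assms unfolding hz_def ext_spec_def ext_set_def by auto
  moreover have "\<forall>Y\<in>ext_spec \<sigma> XX p. Y \<subseteq> Asg (insert p P)"
    using assms unfolding hz_def ext_spec_def ext_set_def ext_asg_def by (auto intro!: Asg_upd)
  ultimately show ?thesis unfolding hz_def by blast
qed

lemma hz_evl1: "hz XX P \<Longrightarrow> hz (evl1 \<alpha> XX Q \<sigma> p) (insert p P)"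
  unfolding evl1_def by (auto intro: hz_ext hz_dual)

lemma prefix_ap_Cons[simp]: "prefix_ap ((Q,\<sigma>,p)#w) = insert p (prefix_ap w)"
  unfolding prefix_ap_def by simp

lemma prefix_ap_append[simp]: "prefix_ap (u @ v) = prefix_ap u \<union> prefix_ap v"
  unfolding prefix_ap_def by simp

lemma hz_evl: "hz XX P \<Longrightarrow> hz (evl \<alpha> XX w) (P \<union> prefix_ap w)"
proof (induction \<alpha> XX w arbitrary: P rule: evl.induct)
  case (1 \<alpha> XX) thus ?case by (simp add: prefix_ap_def)
next
  case (2 \<alpha> XX Q \<sigma> p w)
  have "hz (evl1 \<alpha> XX Q \<sigma> p) (insert p P)" using 2(2) by (rule hz_evl1)
  from 2(1)[OF this] show ?case by simp
qed

lemma evl1_mono: assumes "hz XX1 P" "hz XX2 P" "XX1 \<sqsubseteq>\<^sub>H XX2"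
  shows "evl1 \<alpha> XX1 Q \<sigma> p \<sqsubseteq>\<^sub>H evl1 \<alpha> XX2 Q \<sigma> p"
proof -
  have h1: "hap XX1 = hap XX2" using assms hz_hap by metis
  have h2: "hap (dual XX2) = hap (dual XX1)" using assms hz_hap hz_dual by metis
  show ?thesis unfolding evl1_def
    using ext_mono[OF assms(3) h1] dual_anti[OF ext_mono[OF dual_anti[OF assms(3)] h2]] by simp
qed

lemma evl_mono: "hz XX1 P \<Longrightarrow> hz XX2 P \<Longrightarrow> XX1 \<sqsubseteq>\<^sub>H XX2 \<Longrightarrow> evl \<alpha> XX1 w \<sqsubseteq>\<^sub>H evl \<alpha> XX2 w"
proof (induction w arbitrary: XX1 XX2 P)
  case Nil thus ?case by simp
next
  case (Cons a w)
  obtain Q \<sigma> p where a: "a = (Q,\<sigma>,p)" by (cases a)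
  show ?case unfolding a evl.simps
    by (rule Cons.IH[OF hz_evl1[OF Cons.prems(1)] hz_evl1[OF Cons.prems(2)] evl1_mono[OF Cons.prems]])
qed

lemma evl_append: "evl \<alpha> XX (u @ v) = evl \<alpha> (evl \<alpha> XX u) v"
  by (induction \<alpha> XX u rule: evl.induct) auto



definition contr :: "(tval \<Rightarrow> tval) \<Rightarrow> bool" where
  "contr \<Phi> \<longleftrightarrow> (\<forall>f1 f2 k. (\<forall>t<k. f1 t = f2 t) \<longrightarrow> \<Phi> f1 k = \<Phi> f2 k)"

definition fp :: "(tval \<Rightarrow> tval) \<Rightarrow> tval" where
  "fp \<Phi> = (\<lambda>k. (\<Phi> ^^ Suc k) (\<lambda>_. False) k)"

lemma iter_agree:
  assumes c: "contr \<Phi>"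
  shows "\<forall>m t. t < n \<longrightarrow> t < m \<longrightarrow> (\<Phi> ^^ n) z t = (\<Phi> ^^ m) z t"
proof (induction n)
  case 0 thus ?case by simp
next
  case (Suc n)
  show ?case
  proof (intro allI impI)
    fix m t assume t: "t < Suc n" "t < m"
    then obtain m' where m: "m = Suc m'" by (cases m) auto
    have "\<forall>t'<t. (\<Phi> ^^ n) z t' = (\<Phi> ^^ m') z t'"
    proof (intro allI impI)
      fix t' assume "t' < t"
      hence "t' < n" "t' < m'" using t m by auto
      thus "(\<Phi> ^^ n) z t' = (\<Phi> ^^ m') z t'" using Suc.IH by blast
    qed
    hence "\<Phi> ((\<Phi> ^^ n) z) t = \<Phi> ((\<Phi> ^^ m') z) t" using c unfolding contr_def by blast
    thus "(\<Phi> ^^ Suc n) z t = (\<Phi> ^^ m) z t" using m by simp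
  qed
qed

lemma fp_fix: assumes c: "contr \<Phi>" shows "\<Phi> (fp \<Phi>) = fp \<Phi>"
proof
  fix k
  have "\<forall>t<k. fp \<Phi> t = (\<Phi> ^^ Suc k) (\<lambda>_. False) t"
  proof (intro allI impI)
    fix t assume "t < k"
    hence "t < Suc t" "t < Suc k" by auto
    thus "fp \<Phi> t = (\<Phi> ^^ Suc k) (\<lambda>_. False) t"
      unfolding fp_def using iter_agree[OF c, of "Suc t" "\<lambda>_. False"] by blast
  qed
  hence "\<Phi> (fp \<Phi>) k = \<Phi> ((\<Phi> ^^ Suc k) (\<lambda>_. False)) k" using c unfolding contr_def by blast
  also have "\<dots> = (\<Phi> ^^ Suc (Suc k)) (\<lambda>_. False) k" by simp
  also have "\<dots> = (\<Phi> ^^ Suc k) (\<lambda>_. False) k" by (rule iter_agree[OF c, rule_format]) auto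
  also have "\<dots> = fp \<Phi> k" unfolding fp_def by simp
  finally show "\<Phi> (fp \<Phi>) k = fp \<Phi> k" .
qed

lemma beh_use: "behavioral P F r \<Longrightarrow> x1 \<in> Asg P \<Longrightarrow> x2 \<in> Asg P \<Longrightarrow>
   (\<forall>v\<in>P-{r}. x1 v = x2 v) \<Longrightarrow> (\<forall>t\<le>k. the (x1 r) t = the (x2 r) t) \<Longrightarrow> F x1 k = F x2 k"
  unfolding behavioral_def agree_gt_def by blast

lemma sbeh_use: "strongly_behavioral P F r \<Longrightarrow> x1 \<in> Asg P \<Longrightarrow> x2 \<in> Asg P \<Longrightarrow>
   (\<forall>v\<in>P-{r}. x1 v = x2 v) \<Longrightarrow> (\<forall>t<k. the (x1 r) t = the (x2 r) t) \<Longrightarrow> F x1 k = F x2 k"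
  unfolding strongly_behavioral_def agree_ge_def by blast

context
  fixes P :: "'ap set" and p q :: 'ap and K G :: "'ap fnc"
  assumes pP: "p \<notin> P" and qP: "q \<notin> P" and pq: "p \<noteq> q"
  and Kb: "\<forall>r\<in>insert q P. behavioral (insert q P) K r"
  and Ks: "strongly_behavioral (insert q P) K q"
  and Gb: "\<forall>r\<in>insert p P. behavioral (insert p P) G r"
begin

definition Phi :: "'ap asg \<Rightarrow> tval \<Rightarrow> tval" where
  "Phi x f = K (x(q := Some (G (x(p := Some f)))))"

definition AA :: "'ap asg \<Rightarrow> tval" where "AA x = fp (Phi x)"
definition BB :: "'ap asg \<Rightarrow> tval" where "BB x = G (x(p := Some (AA x)))"

lemma G_p: "x \<in> Asg P \<Longrightarrow> \<forall>t'\<le>t. f1 t' = f2 t' \<Longrightarrow> G (x(p := Some f1)) t = G (x(p := Some f2)) t"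
  by (rule beh_use[OF bspec[OF Gb]]) (auto intro: Asg_upd)

lemma K_q: "x \<in> Asg P \<Longrightarrow> \<forall>t'<t. f1 t' = f2 t' \<Longrightarrow> K (x(q := Some f1)) t = K (x(q := Some f2)) t"
  by (rule sbeh_use[OF Ks]) (auto intro: Asg_upd)

lemma Phi_contr: "x \<in> Asg P \<Longrightarrow> contr (Phi x)"
  unfolding contr_def Phi_def
proof (intro allI impI)
  fix f1 f2 :: tval and k assume x: "x \<in> Asg P" and a: "\<forall>t<k. f1 t = f2 t"
  have "\<forall>t<k. G (x(p := Some f1)) t = G (x(p := Some f2)) t"
    using a by (auto intro!: G_p[OF x])
  thus "K (x(q := Some (G (x(p := Some f1))))) k = K (x(q := Some (G (x(p := Some f2))))) k"
    by (rule K_q[OF x])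
qed

lemma AA_eq: "x \<in> Asg P \<Longrightarrow> AA x = K (x(q := Some (BB x)))"
proof -
  assume x: "x \<in> Asg P"
  have "AA x = Phi x (AA x)" unfolding AA_def using fp_fix[OF Phi_contr[OF x]] by simp
  thus ?thesis unfolding Phi_def BB_def by simp
qed

lemma AA_gen:
  assumes x1: "x1 \<in> Asg P" and x2: "x2 \<in> Asg P"
  and hK: "\<And>g j. j \<le> J \<Longrightarrow> K (x1(q := Some g)) j = K (x2(q := Some g)) j"
  and hG: "\<And>f t. t < J \<Longrightarrow> G (x1(p := Some f)) t = G (x2(p := Some f)) t"
  shows "j \<le> J \<Longrightarrow> AA x1 j = AA x2 j"
proof (induction j rule: less_induct)
  case (less j)
  have IH: "\<forall>t'<j. AA x1 t' = AA x2 t'" using less by auto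
  have g: "\<forall>t<j. BB x1 t = BB x2 t"
  proof (intro allI impI)
    fix t assume t: "t < j"
    have "BB x1 t = G (x2(p := Some (AA x1))) t" unfolding BB_def using hG t less.prems by auto
    also have "\<dots> = BB x2 t" unfolding BB_def using IH t by (auto intro!: G_p[OF x2])
    finally show "BB x1 t = BB x2 t" .
  qed
  have "AA x1 j = K (x1(q := Some (BB x1))) j" using AA_eq[OF x1] by simp
  also have "\<dots> = K (x2(q := Some (BB x1))) j" using hK less.prems by auto
  also have "\<dots> = K (x2(q := Some (BB x2))) j" using g by (rule K_q[OF x2])
  also have "\<dots> = AA x2 j" using AA_eq[OF x2] by simp
  finally show ?case .
qed

lemma upd_agree: "x1 \<in> Asg P \<Longrightarrow> x2 \<in> Asg P \<Longrightarrow> r \<in> P \<Longrightarrow> s \<notin> P \<Longrightarrow> (\<forall>v\<in>P-{r}. x1 v = x2 v) \<Longrightarrow>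
   (\<forall>v\<in>insert s P - {r}. (x1(s := Some f)) v = (x2(s := Some f)) v) \<and>
   (\<forall>t. the ((x1(s := Some f)) r) t = the ((x2(s := Some f)) r) t \<longleftrightarrow> the (x1 r) t = the (x2 r) t)"
  by auto

lemma AA_beh: assumes r: "r \<in> P" shows "behavioral P AA r"
  unfolding behavioral_def
proof (intro allI impI)
  fix k x1 x2 assume x1: "x1 \<in> Asg P" and x2: "x2 \<in> Asg P" and ag: "agree_gt P r k x1 x2"
  have o: "\<forall>v\<in>P-{r}. x1 v = x2 v" and t: "\<forall>t\<le>k. the (x1 r) t = the (x2 r) t"
    using ag unfolding agree_gt_def by auto
  show "AA x1 k = AA x2 k"
  proof (rule AA_gen[OF x1 x2, of k])
    fix g j assume j: "j \<le> k"
    show "K (x1(q := Some g)) j = K (x2(q := Some g)) j"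
      using upd_agree[OF x1 x2 r qP o, of g] t j r o
      by (intro beh_use[OF bspec[OF Kb, of r]]) (auto intro: Asg_upd x1 x2)
  next
    fix f t assume tk: "t < k"
    show "G (x1(p := Some f)) t = G (x2(p := Some f)) t"
      using upd_agree[OF x1 x2 r pP o, of f] t tk r o
      by (intro beh_use[OF bspec[OF Gb, of r]]) (auto intro: Asg_upd x1 x2)
  qed simp
qed

lemma AA_sbeh: assumes r: "r \<in> P" and Kr: "strongly_behavioral (insert q P) K r"
  shows "strongly_behavioral P AA r"
  unfolding strongly_behavioral_def
proof (intro allI impI)
  fix k x1 x2 assume x1: "x1 \<in> Asg P" and x2: "x2 \<in> Asg P" and ag: "agree_ge P r k x1 x2"
  have o: "\<forall>v\<in>P-{r}. x1 v = x2 v" and t: "\<forall>t<k. the (x1 r) t = the (x2 r) t"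
    using ag unfolding agree_ge_def by auto
  show "AA x1 k = AA x2 k"
  proof (rule AA_gen[OF x1 x2, of k])
    fix g j assume j: "j \<le> k"
    show "K (x1(q := Some g)) j = K (x2(q := Some g)) j"
      using upd_agree[OF x1 x2 r qP o, of g] t j r o
      by (intro sbeh_use[OF Kr]) (auto intro: Asg_upd x1 x2)
  next
    fix f t assume tk: "t < k"
    show "G (x1(p := Some f)) t = G (x2(p := Some f)) t"
      using upd_agree[OF x1 x2 r pP o, of f] t tk r o
      by (intro beh_use[OF bspec[OF Gb, of r]]) (auto intro: Asg_upd x1 x2)
  qed simp
qed

lemma BB_beh: assumes r: "r \<in> P" shows "behavioral P BB r"
  unfolding behavioral_def
proof (intro allI impI)
  fix k x1 x2 assume x1: "x1 \<in> Asg P" and x2: "x2 \<in> Asg P" and ag: "agree_gt P r k x1 x2"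
  have o: "\<forall>v\<in>P-{r}. x1 v = x2 v" and t: "\<forall>t\<le>k. the (x1 r) t = the (x2 r) t"
    using ag unfolding agree_gt_def by auto
  have A: "\<forall>t\<le>k. AA x1 t = AA x2 t"
  proof (intro allI impI)
    fix t assume "t \<le> k"
    hence "agree_gt P r t x1 x2" using o t unfolding agree_gt_def by auto
    thus "AA x1 t = AA x2 t" using AA_beh[OF r] x1 x2 unfolding behavioral_def by blast
  qed
  have "BB x1 k = G (x2(p := Some (AA x1))) k" unfolding BB_def
    using upd_agree[OF x1 x2 r pP o, of "AA x1"] t r o
    by (intro beh_use[OF bspec[OF Gb, of r]]) (auto intro: Asg_upd x1 x2)
  also have "\<dots> = BB x2 k" unfolding BB_def using A by (rule G_p[OF x2])
  finally show "BB x1 k = BB x2 k" .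
qed

lemma fix_pair: "\<exists>A B. (\<forall>x\<in>Asg P. A x = K (x(q := Some (B x))) \<and> B x = G (x(p := Some (A x))))
  \<and> (\<forall>r\<in>P. behavioral P A r) \<and> (\<forall>r\<in>P. behavioral P B r)
  \<and> (\<forall>s\<in>P. strongly_behavioral (insert q P) K s \<longrightarrow> strongly_behavioral P A s)"
proof (intro exI conjI)
  show "\<forall>x\<in>Asg P. AA x = K (x(q := Some (BB x))) \<and> BB x = G (x(p := Some (AA x)))"
    using AA_eq BB_def by blast
  show "\<forall>r\<in>P. behavioral P AA r" using AA_beh by blast
  show "\<forall>r\<in>P. behavioral P BB r" using BB_beh by blast
  show "\<forall>s\<in>P. strongly_behavioral (insert q P) K s \<longrightarrow> strongly_behavioral P AA s" using AA_sbeh by blast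
qed

end



lemma Fnc_U: "F \<in> Fnc_spec (UNIV, S) P \<longleftrightarrow> (\<forall>r\<in>P. behavioral P F r) \<and> (\<forall>s\<in>S \<inter> P. strongly_behavioral P F s)"
  unfolding Fnc_spec_def by auto

lemma Fnc_B: "F \<in> Fnc_spec specB P \<longleftrightarrow> (\<forall>r\<in>P. behavioral P F r)"
  unfolding Fnc_spec_def specB_def by auto

lemma swapA:
  assumes hz: "hz XX P" and pq: "p \<noteq> q" and pP: "p \<notin> P" and qP: "q \<notin> P"
  shows "ext_spec specB (dual (ext_spec (UNIV,S) (dual XX) p)) q
     \<sqsubseteq>\<^sub>H dual (ext_spec (UNIV, insert q S) (dual (ext_spec specB XX q)) p)"
proof -
  have hD: "hz (dual XX) P" by (rule hz_dual[OF hz])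
  define E where "E = ext_spec (UNIV,S) (dual XX) p"
  have hE: "hz (dual E) (insert p P)" unfolding E_def by (rule hz_dual[OF hz_ext[OF hD]])
  define X2 where "X2 = ext_spec specB XX q"
  have hX2: "hz (dual X2) (insert q P)" unfolding X2_def by (rule hz_dual[OF hz_ext[OF hz]])
  define E2 where "E2 = ext_spec (UNIV, insert q S) (dual X2) p"
  have hapXX: "hap XX = P" by (rule hz_hap[OF hz])
  have hapD: "hap (dual XX) = P" by (rule hz_hap[OF hD])
  have hapE: "hap (dual E) = insert p P" by (rule hz_hap[OF hE])
  have hapX2: "hap (dual X2) = insert q P" by (rule hz_hap[OF hX2])
  have XXsub: "\<forall>Y\<in>XX. Y \<subseteq> Asg P" using hz unfolding hz_def by auto
  show ?thesis unfolding hle_def E_def[symmetric] X2_def[symmetric] E2_def[symmetric]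
  proof
    fix L assume "L \<in> ext_spec specB (dual E) q"
    then obtain Z G where L: "L = ext_set Z G q" and Z: "Z \<in> dual E"
        and G: "G \<in> Fnc_spec specB (insert p P)"
      unfolding ext_spec_def hapE by auto
    from Z obtain d where Zd: "Z = d ` E" and d: "choice_fun E d" unfolding dual_def by auto
    have Gb: "\<forall>r\<in>insert p P. behavioral (insert p P) G r" using G unfolding Fnc_B by auto
    have key: "\<forall>E'\<in>E2. \<exists>y\<in>E'. y \<in> L"
    proof
      fix E' assume "E' \<in> E2"
      then obtain W K where E': "E' = ext_set W K p" and W: "W \<in> dual X2"
          and K: "K \<in> Fnc_spec (UNIV, insert q S) (insert q P)"
        unfolding E2_def ext_spec_def hapX2 by auto
      from W obtain w where Ww: "W = w ` X2" and w: "choice_fun X2 w" unfolding dual_def by auto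
      have Kb: "\<forall>r\<in>insert q P. behavioral (insert q P) K r" and Ks: "strongly_behavioral (insert q P) K q"
        and KS: "\<forall>s\<in>S \<inter> P. strongly_behavioral (insert q P) K s"
        using K unfolding Fnc_U by auto
      obtain A B where AB: "\<forall>x\<in>Asg P. A x = K (x(q := Some (B x))) \<and> B x = G (x(p := Some (A x)))"
        and Ab: "\<forall>r\<in>P. behavioral P A r" and Bb: "\<forall>r\<in>P. behavioral P B r"
        and As: "\<forall>s\<in>P. strongly_behavioral (insert q P) K s \<longrightarrow> strongly_behavioral P A s"
        using fix_pair[OF pP qP pq Kb Ks Gb] by blast
      have BF: "B \<in> Fnc_spec specB P" using Bb unfolding Fnc_B by auto
      have AF: "A \<in> Fnc_spec (UNIV,S) P" using Ab As KS unfolding Fnc_U by auto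
      define c where "c = (\<lambda>Y. SOME x. x \<in> Y \<and> ext_asg x B q = w (ext_set Y B q))"
      have c: "\<forall>Y\<in>XX. c Y \<in> Y \<and> ext_asg (c Y) B q = w (ext_set Y B q)"
      proof
        fix Y assume Y: "Y \<in> XX"
        have "ext_set Y B q \<in> X2" using Y BF unfolding X2_def ext_spec_def hapXX by auto
        hence "w (ext_set Y B q) \<in> ext_set Y B q" using w unfolding choice_fun_def by auto
        then obtain x where "x \<in> Y" "ext_asg x B q = w (ext_set Y B q)" unfolding ext_set_def by auto
        hence "\<exists>x. x \<in> Y \<and> ext_asg x B q = w (ext_set Y B q)" by auto
        thus "c Y \<in> Y \<and> ext_asg (c Y) B q = w (ext_set Y B q)" unfolding c_def
          by (rule someI_ex[where P="\<lambda>x. x \<in> Y \<and> ext_asg x B q = w (ext_set Y B q)"])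
      qed
      have cY: "c ` XX \<in> dual XX" unfolding dual_def choice_fun_def using c by auto
      have inE: "ext_set (c ` XX) A p \<in> E" unfolding E_def ext_spec_def hapD using cY AF by auto
      hence "d (ext_set (c ` XX) A p) \<in> ext_set (c ` XX) A p" using d unfolding choice_fun_def by auto
      then obtain Y where Y: "Y \<in> XX" and dY: "d (ext_set (c ` XX) A p) = ext_asg (c Y) A p"
        unfolding ext_set_def by auto
      define x where "x = c Y"
      have xP: "x \<in> Asg P" using c Y XXsub unfolding x_def by auto
      have inZ: "ext_asg x A p \<in> Z" using Zd dY inE unfolding x_def by (metis imageI)
      have inL: "ext_asg (ext_asg x A p) G q \<in> L" using L inZ unfolding ext_set_def by auto
      have "ext_set Y B q \<in> X2" using Y BF unfolding X2_def ext_spec_def hapXX by auto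
      hence inW: "ext_asg x B q \<in> W" using c Y Ww unfolding x_def by auto
      have inE': "ext_asg (ext_asg x B q) K p \<in> E'" using E' inW unfolding ext_set_def by auto
      have ab1: "A x = K (x(q := Some (B x))) \<and> B x = G (x(p := Some (A x)))"
        by (rule bspec[OF AB xP])
      have a1: "A x = K (x(q := Some (B x)))" using ab1 by (rule conjunct1)
      have b1: "B x = G (x(p := Some (A x)))" using ab1 by (rule conjunct2)
      have eq: "ext_asg (ext_asg x A p) G q = ext_asg (ext_asg x B q) K p"
        unfolding ext_asg_def b1[symmetric] a1[symmetric] by (rule fun_upd_twist[OF pq])
      show "\<exists>y\<in>E'. y \<in> L" using inE' inL eq by auto
    qed
    define e where "e = (\<lambda>E'. SOME y. y \<in> E' \<and> y \<in> L)"
    have e: "\<forall>E'\<in>E2. e E' \<in> E' \<and> e E' \<in> L"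
    proof
      fix E' assume "E' \<in> E2"
      hence "\<exists>y. y \<in> E' \<and> y \<in> L" using key by auto
      thus "e E' \<in> E' \<and> e E' \<in> L" unfolding e_def by (rule someI_ex[where P="\<lambda>y. y \<in> E' \<and> y \<in> L"])
    qed
    have "e ` E2 \<in> dual E2" unfolding dual_def choice_fun_def using e by auto
    moreover have "e ` E2 \<subseteq> L" using e by auto
    ultimately show "\<exists>T\<in>dual E2. T \<subseteq> L" by auto
  qed
qed



lemma swap_evl1:
  assumes hz: "hz XX P" and pq: "p \<noteq> q" and pP: "p \<notin> P" and qP: "q \<notin> P"
    and Q: "Q \<noteq> coh_quant \<alpha>" and Q': "Q' = coh_quant \<alpha>"
  shows "evl1 \<alpha> (evl1 \<alpha> XX Q (UNIV,S) p) Q' specB q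
     \<sqsubseteq>\<^sub>H evl1 \<alpha> (evl1 \<alpha> XX Q' specB q) Q (UNIV, insert q S) p"
  using swapA[OF hz pq pP qP, of S] Q Q' unfolding evl1_def by simp

lemma prefix_ap_Nil[simp]: "prefix_ap [] = {}" unfolding prefix_ap_def by simp

lemma chain:
  "\<forall>(Q',\<sigma>',q)\<in>set F. Q' = coh_quant \<alpha> \<and> \<sigma>' = specB \<Longrightarrow> Q \<noteq> coh_quant \<alpha> \<Longrightarrow> hz XX P \<Longrightarrow> p \<notin> P
   \<Longrightarrow> p \<notin> prefix_ap F \<Longrightarrow> prefix_ap F \<inter> P = {} \<Longrightarrow> distinct (map (\<lambda>(Q,\<sigma>,p). p) F)
   \<Longrightarrow> evl \<alpha> XX ((Q,(UNIV,S),p)#F) \<sqsubseteq>\<^sub>H evl \<alpha> XX (F @ [(Q,(UNIV, S \<union> prefix_ap F),p)])"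
proof (induction F arbitrary: XX P S)
  case Nil thus ?case by (simp add: hle_refl)
next
  case (Cons a F)
  obtain Q' \<sigma>' q where a: "a = (Q',\<sigma>',q)" by (cases a)
  have Q': "Q' = coh_quant \<alpha>" and \<sigma>': "\<sigma>' = specB" using Cons.prems(1) a by auto
  have pq: "p \<noteq> q" using Cons.prems(5) a by auto
  have qP: "q \<notin> P" using Cons.prems(6) a by auto
  have qF: "q \<notin> prefix_ap F" and dF: "distinct (map (\<lambda>(Q,\<sigma>,p). p) F)"
    using Cons.prems(7) a unfolding prefix_ap_def by auto
  define M where "M = evl1 \<alpha> (evl1 \<alpha> XX Q' specB q) Q (UNIV, insert q S) p"
  have h1: "hz (evl1 \<alpha> (evl1 \<alpha> XX Q (UNIV,S) p) Q' specB q) (insert q (insert p P))"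
    by (rule hz_evl1[OF hz_evl1[OF Cons.prems(3)]])
  have h2: "hz M (insert q (insert p P))" unfolding M_def insert_commute[of q p]
    by (rule hz_evl1[OF hz_evl1[OF Cons.prems(3)]])
  have s1: "evl \<alpha> XX ((Q,(UNIV,S),p)#a#F) \<sqsubseteq>\<^sub>H evl \<alpha> M F"
    unfolding a \<sigma>' evl.simps
    by (rule evl_mono[OF h1 h2]) (unfold M_def, rule swap_evl1[OF Cons.prems(3) pq Cons.prems(4) qP Cons.prems(2) Q'])
  have hq: "hz (evl1 \<alpha> XX Q' specB q) (insert q P)" by (rule hz_evl1[OF Cons.prems(3)])
  have s2: "evl \<alpha> (evl1 \<alpha> XX Q' specB q) ((Q,(UNIV,insert q S),p)#F)
     \<sqsubseteq>\<^sub>H evl \<alpha> (evl1 \<alpha> XX Q' specB q) (F @ [(Q,(UNIV, insert q S \<union> prefix_ap F),p)])"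
  proof (rule Cons.IH[OF _ Cons.prems(2) hq])
    show "\<forall>(Q', \<sigma>', q)\<in>set F. Q' = coh_quant \<alpha> \<and> \<sigma>' = specB" using Cons.prems(1) by auto
    show "p \<notin> insert q P" using pq Cons.prems(4) by auto
    show "p \<notin> prefix_ap F" using Cons.prems(5) a by auto
    show "prefix_ap F \<inter> insert q P = {}" using Cons.prems(6) qF a by auto
    show "distinct (map (\<lambda>(Q,\<sigma>,p). p) F)" by (rule dF)
  qed
  have e1: "evl \<alpha> M F = evl \<alpha> (evl1 \<alpha> XX Q' specB q) ((Q,(UNIV,insert q S),p)#F)"
    unfolding M_def by simp
  have e2: "insert q S \<union> prefix_ap F = S \<union> prefix_ap (a#F)" using a by auto
  have e3: "evl \<alpha> (evl1 \<alpha> XX Q' specB q) (F @ [(Q,(UNIV, S \<union> prefix_ap (a#F)),p)])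
     = evl \<alpha> XX ((a#F) @ [(Q,(UNIV, S \<union> prefix_ap (a#F)),p)])" using a \<sigma>' by simp
  show ?case using hle_trans[OF s1 s2[unfolded e1[symmetric] e2 e3]] by simp
qed

lemma lead_props_eq: "lead_props L w = prefix_ap [(Q', \<sigma>', p') \<leftarrow> w. Q' = L]"
proof (rule set_eqI)
  fix x
  show "x \<in> lead_props L w \<longleftrightarrow> x \<in> prefix_ap [(Q', \<sigma>', p') \<leftarrow> w. Q' = L]"
    unfolding lead_props_def prefix_ap_def
  proof
    assume "x \<in> {p. \<exists>\<sigma>. (L, \<sigma>, p) \<in> set w}"
    then obtain \<sigma> where h: "(L,\<sigma>,x) \<in> set w" by auto
    hence "(L,\<sigma>,x) \<in> set [(Q', \<sigma>', p') \<leftarrow> w. Q' = L]" by simp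
    hence "(\<lambda>(Q,\<sigma>,p). p) (L,\<sigma>,x) \<in> (\<lambda>(Q,\<sigma>,p). p) ` set [(Q', \<sigma>', p') \<leftarrow> w. Q' = L]" by (rule imageI)
    thus "x \<in> set (map (\<lambda>(Q,\<sigma>,p). p) [(Q', \<sigma>', p') \<leftarrow> w. Q' = L])" by simp
  next
    assume "x \<in> set (map (\<lambda>(Q,\<sigma>,p). p) [(Q', \<sigma>', p') \<leftarrow> w. Q' = L])"
    then obtain y where y: "y \<in> set [(Q', \<sigma>', p') \<leftarrow> w. Q' = L]" "x = (\<lambda>(Q,\<sigma>,p). p) y" by auto
    obtain Q \<sigma> p where "y = (Q,\<sigma>,p)" by (cases y)
    hence "(L,\<sigma>,p) \<in> set w" "x = p" using y by auto
    thus "x \<in> {p. \<exists>\<sigma>. (L, \<sigma>, p) \<in> set w}" unfolding mem_Collect_eq by blast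
  qed
qed

lemma canon_coh: "Q = coh_quant \<alpha> \<Longrightarrow> canon \<alpha> ((Q,\<sigma>,p)#w) = (Q,\<sigma>,p) # canon \<alpha> w"
  unfolding canon_def by simp

lemma canon_ncoh: "Q \<noteq> coh_quant \<alpha> \<Longrightarrow> canon \<alpha> ((Q,\<sigma>,p)#w) =
   [(Q', \<sigma>', p') \<leftarrow> w. Q' = coh_quant \<alpha>] @ ((Q, (UNIV, lead_props (coh_quant \<alpha>) w), p) # canon_trail (coh_quant \<alpha>) w)"
  unfolding canon_def by (simp add: spec_union_def specB_def)

lemma part2: "hz XX P \<Longrightarrow> behavioral_prefix w \<Longrightarrow> distinct (map (\<lambda>(Q,\<sigma>,p). p) w)
  \<Longrightarrow> prefix_ap w \<inter> P = {} \<Longrightarrow> evl \<alpha> XX w \<sqsubseteq>\<^sub>H evl \<alpha> XX (canon \<alpha> w)"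
proof (induction w arbitrary: XX P)
  case Nil thus ?case by (simp add: canon_def hle_refl)
next
  case (Cons a w)
  obtain Q \<sigma> p where a: "a = (Q,\<sigma>,p)" by (cases a)
  have \<sigma>: "\<sigma> = specB" using Cons.prems(2) a unfolding behavioral_prefix_def by auto
  have bw: "behavioral_prefix w" using Cons.prems(2) unfolding behavioral_prefix_def by auto
  have pw: "p \<notin> prefix_ap w" and dw: "distinct (map (\<lambda>(Q,\<sigma>,p). p) w)"
    using Cons.prems(3) a unfolding prefix_ap_def by auto
  have pP: "p \<notin> P" using Cons.prems(4) a by auto
  have wP: "prefix_ap w \<inter> insert p P = {}" using Cons.prems(4) pw a by auto
  define XX1 where "XX1 = evl1 \<alpha> XX Q \<sigma> p"
  have h1: "hz XX1 (insert p P)" unfolding XX1_def by (rule hz_evl1[OF Cons.prems(1)])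
  have IH: "evl \<alpha> XX1 w \<sqsubseteq>\<^sub>H evl \<alpha> XX1 (canon \<alpha> w)" by (rule Cons.IH[OF h1 bw dw wP])
  show ?case
  proof (cases "Q = coh_quant \<alpha>")
    case True
    show ?thesis unfolding a canon_coh[OF True] using IH unfolding XX1_def by simp
  next
    case False
    define L where "L = coh_quant \<alpha>"
    define Fw where "Fw = [(Q', \<sigma>', p') \<leftarrow> w. Q' = L]"
    define T where "T = canon_trail L w"
    have cw: "canon \<alpha> w = Fw @ T" unfolding canon_def Fw_def T_def L_def by simp
    have ca: "canon \<alpha> (a#w) = (Fw @ [(Q, (UNIV, prefix_ap Fw), p)]) @ T"
      unfolding a canon_ncoh[OF False] Fw_def T_def L_def lead_props_eq by simp
    have FwC: "\<forall>(Q',\<sigma>',q)\<in>set Fw. Q' = coh_quant \<alpha> \<and> \<sigma>' = specB"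
      using Cons.prems(2) unfolding Fw_def L_def behavioral_prefix_def by auto
    have sub: "prefix_ap Fw \<subseteq> prefix_ap w" unfolding Fw_def prefix_ap_def set_map by (rule image_mono) auto
    have dF: "distinct (map (\<lambda>(Q,\<sigma>,p). p) Fw)" unfolding Fw_def using dw by (rule distinct_map_filter)
    have ch: "evl \<alpha> XX ((Q,(UNIV,{}),p)#Fw) \<sqsubseteq>\<^sub>H evl \<alpha> XX (Fw @ [(Q,(UNIV, {} \<union> prefix_ap Fw),p)])"
      by (rule chain[OF FwC False Cons.prems(1) pP]) (use pw sub Cons.prems(4) a dF in auto)
    have ch': "evl \<alpha> XX1 Fw \<sqsubseteq>\<^sub>H evl \<alpha> XX (Fw @ [(Q,(UNIV, prefix_ap Fw),p)])"
      using ch unfolding XX1_def \<sigma> specB_def by simp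
    have hA: "hz (evl \<alpha> XX1 Fw) (insert p P \<union> prefix_ap Fw)" by (rule hz_evl[OF h1])
    have hB0: "hz (evl \<alpha> XX (Fw @ [(Q,(UNIV, prefix_ap Fw),p)])) (P \<union> prefix_ap (Fw @ [(Q,(UNIV, prefix_ap Fw),p)]))"
      by (rule hz_evl[OF Cons.prems(1)])
    have eqs: "P \<union> prefix_ap (Fw @ [(Q,(UNIV, prefix_ap Fw),p)]) = insert p P \<union> prefix_ap Fw" by auto
    have hB: "hz (evl \<alpha> XX (Fw @ [(Q,(UNIV, prefix_ap Fw),p)])) (insert p P \<union> prefix_ap Fw)"
      using hB0 unfolding eqs .
    have m: "evl \<alpha> (evl \<alpha> XX1 Fw) T \<sqsubseteq>\<^sub>H evl \<alpha> (evl \<alpha> XX (Fw @ [(Q,(UNIV, prefix_ap Fw),p)])) T"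
      by (rule evl_mono[OF hA hB ch'])
    have e1: "evl \<alpha> XX (a#w) = evl \<alpha> XX1 w" unfolding a XX1_def by simp
    have e2: "evl \<alpha> XX1 (canon \<alpha> w) = evl \<alpha> (evl \<alpha> XX1 Fw) T" unfolding cw evl_append ..
    have e3: "evl \<alpha> XX (canon \<alpha> (a#w)) = evl \<alpha> (evl \<alpha> XX (Fw @ [(Q,(UNIV, prefix_ap Fw),p)])) T"
      unfolding ca evl_append ..
    have "evl \<alpha> XX1 w \<sqsubseteq>\<^sub>H evl \<alpha> (evl \<alpha> XX (Fw @ [(Q,(UNIV, prefix_ap Fw),p)])) T"
      using hle_trans[OF IH[unfolded e2] m] .
    thus ?thesis unfolding e1 e3 .
  qed
qed

lemma flag_bar_bar[simp]: "flag_bar (flag_bar \<beta>) = \<beta>" by (cases \<beta>) auto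

lemma coh_bar: "coh_quant (flag_bar \<beta>) \<noteq> coh_quant \<beta>" by (cases \<beta>) auto

lemma quant2: "Q \<noteq> coh_quant \<beta> \<Longrightarrow> Q = coh_quant (flag_bar \<beta>)"
  by (cases \<beta>; cases Q) auto

lemma evl1_dual: assumes hz: "hz XX P"
  shows "dual (evl1 (flag_bar \<beta>) XX Q \<sigma> p) \<sqsubseteq>\<^sub>H evl1 \<beta> (dual XX) Q \<sigma> p
       \<and> evl1 \<beta> (dual XX) Q \<sigma> p \<sqsubseteq>\<^sub>H dual (evl1 (flag_bar \<beta>) XX Q \<sigma> p)"
proof (cases "Q = coh_quant \<beta>")
  case True
  hence n: "Q \<noteq> coh_quant (flag_bar \<beta>)" using coh_bar by metis
  have hE: "hz (ext_spec \<sigma> (dual XX) p) (insert p P)" by (rule hz_ext[OF hz_dual[OF hz]])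
  show ?thesis unfolding evl1_def using True n dd1[OF hE] dd2[OF hE] by simp
next
  case False
  hence y: "Q = coh_quant (flag_bar \<beta>)" by (rule quant2)
  have hdd: "hz (dual (dual XX)) P" by (rule hz_dual[OF hz_dual[OF hz]])
  have hp: "hap XX = hap (dual (dual XX))" using hz_hap[OF hz] hz_hap[OF hdd] by simp
  have a1: "ext_spec \<sigma> XX p \<sqsubseteq>\<^sub>H ext_spec \<sigma> (dual (dual XX)) p" by (rule ext_mono[OF dd1[OF hz] hp])
  have a2: "ext_spec \<sigma> (dual (dual XX)) p \<sqsubseteq>\<^sub>H ext_spec \<sigma> XX p" by (rule ext_mono[OF dd2[OF hz] hp[symmetric]])
  show ?thesis unfolding evl1_def using False y dual_anti[OF a1] dual_anti[OF a2] by simp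
qed

lemma evl_dual: "hz XX P \<Longrightarrow> evl (flag_bar \<beta>) XX w \<sqsubseteq>\<^sub>H dual (evl \<beta> (dual XX) w)
   \<and> dual (evl \<beta> (dual XX) w) \<sqsubseteq>\<^sub>H evl (flag_bar \<beta>) XX w"
proof (induction w arbitrary: XX P)
  case Nil thus ?case using dd1[OF Nil] dd2[OF Nil] by simp
next
  case (Cons a w)
  obtain Q \<sigma> p where a: "a = (Q,\<sigma>,p)" by (cases a)
  define X1 where "X1 = evl1 (flag_bar \<beta>) XX Q \<sigma> p"
  define X2 where "X2 = evl1 \<beta> (dual XX) Q \<sigma> p"
  have h1: "hz X1 (insert p P)" unfolding X1_def by (rule hz_evl1[OF Cons.prems])
  have hd1: "hz (dual X1) (insert p P)" by (rule hz_dual[OF h1])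
  have h2: "hz X2 (insert p P)" unfolding X2_def by (rule hz_evl1[OF hz_dual[OF Cons.prems]])
  have IH: "evl (flag_bar \<beta>) X1 w \<sqsubseteq>\<^sub>H dual (evl \<beta> (dual X1) w)
     \<and> dual (evl \<beta> (dual X1) w) \<sqsubseteq>\<^sub>H evl (flag_bar \<beta>) X1 w" by (rule Cons.IH[OF h1])
  have d: "dual X1 \<sqsubseteq>\<^sub>H X2 \<and> X2 \<sqsubseteq>\<^sub>H dual X1" unfolding X1_def X2_def by (rule evl1_dual[OF Cons.prems])
  have m1: "evl \<beta> (dual X1) w \<sqsubseteq>\<^sub>H evl \<beta> X2 w" using d by (intro evl_mono[OF hd1 h2]) auto
  have m2: "evl \<beta> X2 w \<sqsubseteq>\<^sub>H evl \<beta> (dual X1) w" using d by (intro evl_mono[OF h2 hd1]) auto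
  have l: "evl (flag_bar \<beta>) XX (a#w) = evl (flag_bar \<beta>) X1 w" unfolding a X1_def by simp
  have r: "evl \<beta> (dual XX) (a#w) = evl \<beta> X2 w" unfolding a X2_def by simp
  show ?case unfolding l r using IH hle_trans dual_anti[OF m1] dual_anti[OF m2] by metis
qed

theorem mainTheorem13:
  fixes \<alpha> :: aflag and \<X> :: "'ap hasg" and w :: "'ap prefix"
  assumes "is_hasg \<X>"
    and "behavioral_prefix w"
    and "distinct (map (\<lambda>(Q, \<sigma>, p). p) w)"
    and "prefix_ap w \<inter> hap \<X> = {}"
  shows "evl \<alpha> \<X> (canon (flag_bar \<alpha>) w) \<sqsubseteq>\<^sub>H evl \<alpha> \<X> w
       \<and> evl \<alpha> \<X> w \<sqsubseteq>\<^sub>H evl \<alpha> \<X> (canon \<alpha> w)"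
proof
  have hz: "hz \<X> (hap \<X>)" by (rule hz_is_hasg[OF assms(1)])
  show "evl \<alpha> \<X> w \<sqsubseteq>\<^sub>H evl \<alpha> \<X> (canon \<alpha> w)" by (rule part2[OF hz assms(2-4)])
  have hd: "hz (dual \<X>) (hap \<X>)" by (rule hz_dual[OF hz])
  have p: "evl (flag_bar \<alpha>) (dual \<X>) w \<sqsubseteq>\<^sub>H evl (flag_bar \<alpha>) (dual \<X>) (canon (flag_bar \<alpha>) w)"
    by (rule part2[OF hd assms(2-4)])
  have d1: "evl \<alpha> \<X> (canon (flag_bar \<alpha>) w) \<sqsubseteq>\<^sub>H dual (evl (flag_bar \<alpha>) (dual \<X>) (canon (flag_bar \<alpha>) w))"
    using evl_dual[OF hz, of "flag_bar \<alpha>" "canon (flag_bar \<alpha>) w"] by simp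
  have d2: "dual (evl (flag_bar \<alpha>) (dual \<X>) w) \<sqsubseteq>\<^sub>H evl \<alpha> \<X> w"
    using evl_dual[OF hz, of "flag_bar \<alpha>" w] by simp
  show "evl \<alpha> \<X> (canon (flag_bar \<alpha>) w) \<sqsubseteq>\<^sub>H evl \<alpha> \<X> w"
    by (rule hle_trans[OF d1 hle_trans[OF dual_anti[OF p] d2]])
qed


end
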